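(* Let $q \ge 2$, $n \ge 1$ and $k \ge 0$ be integers, and let $\alpha_{i,j}$ be as defined in the context. Then $$\alpha_{k+2,k+1} = (k+1)(2q-1) - (q-1)n.$$
   Context: Let $g(y) = \dfrac{y(1-y)}{(1+(q-1)y)^2}$, a formal power series in $y$ with $g(0)=0$ and $g'(0) = 1 \ne 0$. For each integer $j \ge 0$, the formal power series $y^j (1+(q-1)y)^{-n}$ can be uniquely expanded as $\sum_{i \ge 0} \alpha_{i,j}\, g(y)^i$; this defines the real numbers $\alpha_{i,j}$. (Equivalently, these are the coefficients in $c_i = \sum_{j \le i} \alpha_{i,j} A_j$ relating the weight distribution $A_0,\dots,A_n$ of a pure state to the coefficients $c_i$ of its expansion $A(x,y)=\sum_{i=0}^{\lfloor n/2\rfloor} c_i (x+(q-1)y)^{n-2i}(y(x-y))^i$.) *)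

theory Defs
  imports "HOL-Computational_Algebra.Formal_Power_Series"
begin

definition g_fps :: "nat \<Rightarrow> real fps" where
  "g_fps q = fps_X * (1 - fps_X) * inverse ((1 + fps_const (real q - 1) * fps_X) ^ 2)"

definition F_fps :: "nat \<Rightarrow> nat \<Rightarrow> nat \<Rightarrow> real fps" where
  "F_fps q n j = fps_X ^ j * inverse ((1 + fps_const (real q - 1) * fps_X) ^ n)"

text \<open>alpha_{i,j}: the unique coefficients with F = sum_i alpha_{i,j} g^i.
  Since g^i has order i, the m-th coefficient of the formal sum sum_i a_i g^i
  is the finite sum over i \<le> m.\<close>
definition alpha :: "nat \<Rightarrow> nat \<Rightarrow> nat \<Rightarrow> nat \<Rightarrow> real" where
  "alpha q n i j = (THE a :: nat \<Rightarrow> real.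
     \<forall>m. fps_nth (F_fps q n j) m = (\<Sum>i'\<le>m. a i' * fps_nth (g_fps q ^ i') m)) i"

end

theory Submission
  imports Defs
begin

unbundle fps_syntax

function sol :: "real fps \<Rightarrow> (nat \<Rightarrow> real fps) \<Rightarrow> nat \<Rightarrow> real" where
  "sol F G m = F $ m - (\<Sum>i<m. sol F G i * G i $ m)"
  by auto
termination by (relation "measure (\<lambda>(F,G,m). m)") auto

declare sol.simps[simp del]

lemma inv_nth01:
  fixes u :: "real fps"
  assumes "u $ 0 = 1"
  shows "inverse u $ 0 = 1" "inverse u $ 1 = - u $ 1"
proof -
  show "inverse u $ 0 = 1" using assms by simp
  have "(inverse u * u) $ 1 = 1 $ 1" using inverse_mult_eq_1[of u] assms by simp
  then show "inverse u $ 1 = - u $ 1" using assms by (simp add: fps_mult_nth_1)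
qed

lemma lin_pow:
  fixes c :: real
  shows "(1 + fps_const c * fps_X) ^ n $ 0 = 1" "(1 + fps_const c * fps_X) ^ n $ 1 = real n * c"
proof -
  have a0: "(1 + fps_const c * fps_X) $ 0 = 1" by simp
  have a1: "(1 + fps_const c * fps_X) $ 1 = c" by simp
  show "(1 + fps_const c * fps_X) ^ n $ 0 = 1" using fps_power_zeroth_eq_one[OF a0] .
  show "(1 + fps_const c * fps_X) ^ n $ 1 = real n * c" using fps_power_first_eq[OF a0] a1 by simp
qed

lemma theI_prop:
  fixes q n j :: nat
  defines "P \<equiv> \<lambda>a :: nat \<Rightarrow> real. \<forall>m. fps_nth (F_fps q n j) m = (\<Sum>i'\<le>m. a i' * fps_nth (g_fps q ^ i') m)"
  assumes diag: "\<And>i. (g_fps q ^ i) $ i = 1" and low: "\<And>i m. m < i \<Longrightarrow> (g_fps q ^ i) $ m = 0"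
  shows "P (\<lambda>i. alpha q n i j)"
proof -
  define G where "G = (\<lambda>i. g_fps q ^ i)"
  define a where "a = sol (F_fps q n j) G"
  have Pa: "P a"
    unfolding P_def
  proof
    fix m
    have "(\<Sum>i'\<le>m. a i' * (g_fps q ^ i') $ m) = (\<Sum>i'<m. a i' * G i' $ m) + a m"
      by (simp add: lessThan_Suc_atMost[symmetric] G_def diag)
    also have "\<dots> = F_fps q n j $ m" unfolding a_def by (subst (2) sol.simps) simp
    finally show "F_fps q n j $ m = (\<Sum>i'\<le>m. a i' * (g_fps q ^ i') $ m)" by simp
  qed
  have uniq: "b = a" if "P b" for b
  proof
    fix i show "b i = a i"
    proof (induction i rule: less_induct)
      case (less i)
      have e1: "F_fps q n j $ i = (\<Sum>i'<i. b i' * (g_fps q ^ i') $ i) + b i"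
        using \<open>P b\<close> unfolding P_def by (simp add: lessThan_Suc_atMost[symmetric] diag)
      have e2: "F_fps q n j $ i = (\<Sum>i'<i. a i' * (g_fps q ^ i') $ i) + a i"
        using Pa unfolding P_def by (simp add: lessThan_Suc_atMost[symmetric] diag)
      have "(\<Sum>i'<i. b i' * (g_fps q ^ i') $ i) = (\<Sum>i'<i. a i' * (g_fps q ^ i') $ i)"
        using less by (intro sum.cong) auto
      then show ?case using e1 e2 by linarith
    qed
  qed
  have "(THE a. P a) = a" using Pa uniq by (rule the_equality)
  moreover have "(\<lambda>i. alpha q n i j) = (THE a. P a)" unfolding alpha_def P_def by simp
  ultimately show ?thesis using Pa by simp
qed

theorem lemma2:
  fixes q n k :: nat
  assumes "q \<ge> 2" and "n \<ge> 1"
  shows "alpha q n (k + 2) (k + 1) = real (k + 1) * (2 * real q - 1) - (real q - 1) * real n"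
proof -
  define c where "c = real q - 1"
  define L where "L = (\<lambda>m. (1 + fps_const c * fps_X) ^ m)"
  define h where "h = (1 - fps_X) * inverse (L 2)"
  have L0: "\<And>m. L m $ 0 = 1" and L1: "\<And>m. L m $ 1 = real m * c" unfolding L_def using lin_pow by auto
  have iL0: "\<And>m. inverse (L m) $ 0 = 1" and iL1: "\<And>m. inverse (L m) $ 1 = - real m * c"
    using inv_nth01[OF L0] L1 by auto
  have h0: "h $ 0 = 1" unfolding h_def using iL0 by simp
  have h1: "h $ 1 = -1 - 2 * c" unfolding h_def using iL0 iL1 by (simp add: fps_mult_nth_1)
  have g: "g_fps q = fps_X * h" unfolding g_fps_def h_def L_def c_def by (simp add: mult.assoc)
  have gp: "g_fps q ^ i = fps_X ^ i * h ^ i" for i by (simp add: g power_mult_distrib)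
  have gnth: "(g_fps q ^ i) $ m = (if m < i then 0 else (h ^ i) $ (m - i))" for i m
    by (simp add: gp fps_X_power_mult_nth)
  have diag: "(g_fps q ^ i) $ i = 1" for i using gnth fps_power_zeroth_eq_one[OF h0] by simp
  have low: "m < i \<Longrightarrow> (g_fps q ^ i) $ m = 0" for i m using gnth by simp
  have g1: "(g_fps q ^ i) $ Suc i = real i * (-1 - 2 * c)" for i
    using gnth[of i "Suc i"] fps_power_first_eq[OF h0, of i] h1 by simp
  define j where "j = k + 1"
  have F: "F_fps q n j = fps_X ^ j * inverse (L n)" unfolding F_fps_def L_def c_def by simp
  have Fnth: "F_fps q n j $ m = (if m < j then 0 else inverse (L n) $ (m - j))" for m
    by (simp add: F fps_X_power_mult_nth)
  define a where "a = (\<lambda>i. alpha q n i j)"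
  have P: "\<And>m. F_fps q n j $ m = (\<Sum>i'\<le>m. a i' * (g_fps q ^ i') $ m)"
    using theI_prop[of q, OF diag low, of n j] unfolding a_def by simp
  have eqm: "F_fps q n j $ m = (\<Sum>i'<m. a i' * (g_fps q ^ i') $ m) + a m" for m
    using P[of m] by (simp add: lessThan_Suc_atMost[symmetric] diag)
  have zero: "i < j \<Longrightarrow> a i = 0" for i
  proof (induction i rule: less_induct)
    case (less i)
    have "(\<Sum>i'<i. a i' * (g_fps q ^ i') $ i) = 0" using less by (intro sum.neutral) auto
    then show ?case using eqm[of i] Fnth[of i] less.prems by simp
  qed
  have s1: "(\<Sum>i'<j. a i' * (g_fps q ^ i') $ m) = 0" for m using zero by (intro sum.neutral) auto
  have aj: "a j = 1" using eqm[of j] s1[of j] Fnth[of j] iL0 by simp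
  have "(\<Sum>i'<Suc j. a i' * (g_fps q ^ i') $ Suc j) = a j * (g_fps q ^ j) $ Suc j"
    using s1[of "Suc j"] by simp
  then have "F_fps q n j $ Suc j = real j * (-1 - 2 * c) + a (Suc j)"
    using eqm[of "Suc j"] aj g1 by simp
  moreover have "F_fps q n j $ Suc j = - real n * c" using Fnth[of "Suc j"] iL1 by simp
  ultimately have "a (Suc j) = real j * (1 + 2 * c) - real n * c" by (simp add: algebra_simps)
  then show ?thesis unfolding a_def j_def c_def by (simp add: algebra_simps)
qed

end
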